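(* For every integer $m\ge0$, the following identity of rational functions in indeterminates $x,y$ holds: $$\frac{(1-x^{m+1})(1-y^{m+1})}{(1-x)^{m+1}(1-y)^{m+1}}=\sum_{r=0}^{m}\sum_{s=0}^{m-r}\frac{m+1}{m+1-r-s}\binom{m-r}{s}\binom{m-s}{r}\frac{x^ry^s}{(1-x)^{r+s}(1-y)^{r+s}}.$$ Equivalently, for every integer $m\ge1$, $$(1-x^m)(1-y^m)=\sum_{k=0}^{m-1}\sum_{i=0}^{k}\frac{m}{m-k}\binom{m-k+i-1}{i}\binom{m-i-1}{k-i}x^iy^{k-i}(1-x)^{m-k}(1-y)^{m-k}.$$ *)

theory Defs
  imports Complex_Main
begin

end

theory Submission imports Defs "HOL-Computational_Algebra.Formal_Power_Series" begin

unbundle fps_syntax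

definition E :: "'a::field_char_0 \<Rightarrow> 'a fps" where "E c = Abs_fps (\<lambda>k. c ^ k)"

lemma E_nth [simp]: "E c $ k = c ^ k" by (simp add: E_def)

lemma E_inv: "E c * (1 - fps_const c * fps_X) = 1"
proof -
  have "E c * (1 - fps_const c * fps_X) = E c - fps_X * (fps_const c * E c)"
    by (simp add: algebra_simps)
  also have "\<dots> = 1"
    by (rule fps_ext) (auto simp: gr0_conv_Suc)
  finally show ?thesis .
qed

lemma E_pow_nth: "(E c ^ n) $ k = of_nat (n + k - 1 choose k) * c ^ k"
proof (induction n arbitrary: k)
  case 0 then show ?case by (cases k) auto
next
  case (Suc n)
  show ?case
  proof (cases n)
    case 0 then show ?thesis by (simp add: E_def)
  next
    case (Suc n')
    have "(E c ^ Suc n) $ k = (\<Sum>i=0..k. (E c ^ n) $ i * c ^ (k - i))"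
      by (simp only: power_Suc2 fps_mult_nth E_nth)
    also have "\<dots> = (\<Sum>i=0..k. of_nat (n' + i choose i) * c ^ k)"
      using Suc.IH Suc by (intro sum.cong) (auto simp: power_add[symmetric])
    also have "\<dots> = of_nat (\<Sum>i\<le>k. n' + i choose i) * c ^ k"
      by (simp add: sum_distrib_right atMost_atLeast0)
    also have "\<dots> = of_nat (Suc n + k - 1 choose k) * c ^ k"
      by (subst sum_choose_lower) (simp add: Suc)
    finally show ?thesis .
  qed
qed

lemma E_deriv: "fps_deriv (E c) = fps_const c * E c ^ 2"
  by (rule fps_ext) (simp add: E_pow_nth)

definition F :: "'a::field_char_0 \<Rightarrow> 'a \<Rightarrow> nat \<Rightarrow> 'a fps" where "F x y n = (E x * E y) ^ n"
definition Q :: "'a::field_char_0 \<Rightarrow> 'a \<Rightarrow> 'a fps" where "Q x y = E x + fps_const y * fps_X * E y"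

lemma F_nth: "F x y n $ k = (\<Sum>i=0..k. of_nat (n + i - 1 choose i) * x ^ i * (of_nat (n + (k - i) - 1 choose (k - i)) * y ^ (k - i)))"
  by (simp add: F_def power_mult_distrib fps_mult_nth E_pow_nth mult.assoc)

lemma E_rec: "E c = 1 + fps_const c * fps_X * E c"
  using E_inv[of c] by (simp add: algebra_simps)

lemma key_fps:
  assumes "n \<ge> 1"
  shows "fps_const (of_nat n) * F x y n + fps_X * fps_deriv (F x y n) = fps_const (of_nat n) * F x y n * Q x y"
proof -
  obtain n' where n: "n = Suc n'" using assms by (cases n) auto
  have d: "fps_deriv (E x * E y) = E x * E y * (fps_const x * E x + fps_const y * E y)"
    by (simp add: E_deriv power2_eq_square algebra_simps)
  have "fps_X * fps_deriv (F x y n) = fps_const (of_nat n) * F x y n * (fps_const x * fps_X * E x + fps_const y * fps_X * E y)"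
    unfolding F_def fps_deriv_power d n by (simp add: algebra_simps)
  moreover have "Q x y = 1 + fps_const x * fps_X * E x + fps_const y * fps_X * E y"
    unfolding Q_def by (subst E_rec[of x]) simp
  ultimately show ?thesis by (simp add: algebra_simps)
qed

lemma X_deriv_nth: "(fps_X * fps_deriv f) $ k = of_nat k * f $ k"
  by (cases k) auto

lemma FQ_nth:
  assumes "n \<ge> 1"
  shows "(F x y n * Q x y) $ k = of_nat (n + k) / of_nat n * F x y n $ k"
proof -
  have "(fps_const (of_nat n) * F x y n * Q x y) $ k = of_nat (n + k) * F x y n $ k"
    unfolding key_fps[OF assms, symmetric] by (simp add: X_deriv_nth algebra_simps)
  hence "of_nat n * (F x y n * Q x y) $ k = of_nat (n + k) * F x y n $ k"
    by (simp add: mult.assoc)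
  with assms show ?thesis by (simp add: field_simps)
qed

definition P :: "'a::field_char_0 \<Rightarrow> 'a \<Rightarrow> 'a fps" where
  "P x y = fps_const ((1 - x) * (1 - y)) * fps_X * E x * E y"

lemma PQ_nth:
  assumes "1 \<le> n" "n \<le> m"
  shows "(P x y ^ n * Q x y) $ m = ((1 - x) * (1 - y)) ^ n * (of_nat m / of_nat n) * F x y n $ (m - n)"
proof -
  have eq: "P x y ^ n * Q x y = fps_X ^ n * (fps_const (((1 - x) * (1 - y)) ^ n) * (F x y n * Q x y))"
    by (simp add: P_def F_def power_mult_distrib fps_const_power algebra_simps)
  show ?thesis using assms by (subst eq) (simp add: fps_X_power_mult_nth FQ_nth)
qed

lemma poly_id:
  fixes X a b :: "'b::comm_ring_1"
  shows "((1 - a*X)*(1 - b*X) - (1-a)*(1-b)*X) *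
    ((1 - a*X)*(1 - b*X)*(1 - a*b*X) - (1 - X)*(1 - b*X)*(1 - a*b*X) - (1 - X)*(1 - a*X)*(1 - a*b*X) + (1 - X)*(1 - a*X)*(1 - b*X))
   = (1-a)*(1-b)*X * ((1 - b*X) + b*X*(1 - a*X)) * (1 - X) * (1 - a*b*X)"
  by (simp add: algebra_simps power2_eq_square)

definition G :: "'a::field_char_0 \<Rightarrow> 'a \<Rightarrow> 'a fps" where "G x y = E 1 - E x - E y + E (x * y)"

lemma G_nth: "G x y $ m = (1 - x ^ m) * (1 - y ^ m)"
  by (simp add: G_def power_mult_distrib algebra_simps)

lemma G_eq: "(1 - P x y) * G x y = P x y * Q x y"
proof -
  define a where "a c = 1 - fps_const c * fps_X" for c :: 'a
  define D where "D = (a x * a y) * (a 1 * a x * a y * a (x*y))"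
  have inv: "E c * a c = 1" for c unfolding a_def by (rule E_inv)
  have D0: "D \<noteq> 0"
  proof
    assume "D = 0" hence "D $ 0 = 0" by simp
    thus False by (simp add: D_def a_def)
  qed
  have h1: "P x y * (a x * a y) = fps_const ((1 - x) * (1 - y)) * fps_X"
  proof -
    have "P x y * (a x * a y) = fps_const ((1 - x) * (1 - y)) * fps_X * ((E x * a x) * (E y * a y))"
      unfolding P_def by (simp add: ac_simps)
    thus ?thesis by (simp add: inv)
  qed
  have h2: "G x y * (a 1 * a x * a y * a (x*y)) = a x * a y * a (x*y) - a 1 * a y * a (x*y) - a 1 * a x * a (x*y) + a 1 * a x * a y"
  proof -
    have "G x y * (a 1 * a x * a y * a (x*y)) = (E 1 * a 1) * (a x * a y * a (x*y)) - (E x * a x) * (a 1 * a y * a (x*y))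
       - (E y * a y) * (a 1 * a x * a (x*y)) + (E (x*y) * a (x*y)) * (a 1 * a x * a y)"
      unfolding G_def by (simp add: algebra_simps)
    thus ?thesis by (simp only: inv mult_1_left)
  qed
  have h3: "Q x y * (a x * a y) = a y + fps_const y * fps_X * a x"
  proof -
    have "Q x y * (a x * a y) = (E x * a x) * a y + fps_const y * fps_X * (E y * a y) * a x"
      unfolding Q_def by (simp add: algebra_simps)
    thus ?thesis by (simp only: inv mult_1_left mult_1_right)
  qed
  have ax: "a c = 1 - fps_const c * fps_X" for c unfolding a_def ..
  have axy: "a (x*y) = 1 - fps_const x * fps_const y * fps_X" by (simp add: a_def fps_const_mult)
  have a1: "a 1 = 1 - fps_X" by (simp add: a_def)
  have tc: "fps_const ((1-x)*(1-y)) = (1 - fps_const x) * (1 - fps_const y)"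
    by (simp add: fps_const_mult[symmetric] fps_const_sub[symmetric])
  have "((1 - P x y) * G x y) * D = (a x * a y - P x y * (a x * a y)) * (G x y * (a 1 * a x * a y * a (x*y)))"
    unfolding D_def by (simp add: algebra_simps)
  also have "\<dots> = (P x y * (a x * a y)) * (Q x y * (a x * a y)) * a 1 * a (x*y)"
    unfolding h1 h2 h3 unfolding a1 axy ax[of x] ax[of y] tc by (rule poly_id)
  also have "\<dots> = (P x y * Q x y) * D"
    unfolding D_def by (simp add: algebra_simps)
  finally show ?thesis using D0 by simp
qed

lemma telescope: "(1 - p) * (\<Sum>n=1..N. p ^ n) = p - p ^ (N + 1)" for p :: "'b::comm_ring_1"
proof (induction N)
  case 0 then show ?case by simp
next
  case (Suc N)
  have "(1 - p) * (\<Sum>n=1..Suc N. p ^ n) = (1 - p) * (\<Sum>n=1..N. p ^ n) + (1 - p) * p ^ Suc N"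
    by (simp add: distrib_left)
  also have "\<dots> = p - p ^ (N + 1) + (1 - p) * p ^ Suc N" using Suc.IH by simp
  also have "\<dots> = p - p ^ (Suc N + 1)" by (simp add: algebra_simps)
  finally show ?case .
qed

lemma sum_coeff:
  assumes "m \<le> N"
  shows "(\<Sum>n=1..N. (P x y ^ n * Q x y) $ m) = (1 - x ^ m) * (1 - y ^ m)"
proof -
  define S where "S = (\<Sum>n=1..N. P x y ^ n)"
  define R where "R = fps_const ((1 - x) * (1 - y)) * E x * E y"
  have PR: "P x y = fps_X * R" unfolding P_def R_def by (simp add: ac_simps)
  have P0: "P x y $ 0 = 0" by (simp add: PR)
  define H where "H = inverse (1 - P x y)"
  have H: "H * (1 - P x y) = 1" unfolding H_def by (rule inverse_mult_eq_1) (simp add: P0)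
  have "(1 - P x y) * (S * Q x y - G x y) = (P x y - P x y ^ (N+1)) * Q x y - P x y * Q x y"
  proof -
    have "(1 - P x y) * (S * Q x y - G x y) = ((1 - P x y) * S) * Q x y - (1 - P x y) * G x y"
      by (simp add: algebra_simps)
    then show ?thesis by (simp only: S_def telescope G_eq)
  qed
  also have "\<dots> = - (P x y ^ (N+1) * Q x y)" by (simp add: algebra_simps)
  finally have hh: "H * ((1 - P x y) * (S * Q x y - G x y)) = H * - (P x y ^ (N+1) * Q x y)" by simp
  hence "S * Q x y - G x y = - (fps_X ^ (N+1) * (R ^ (N+1) * Q x y * H))"
  proof -
    have "S * Q x y - G x y = (H * (1 - P x y)) * (S * Q x y - G x y)" by (simp add: H)
    also have "\<dots> = H * - (P x y ^ (N+1) * Q x y)" using hh by (simp only: mult.assoc)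
    also have "\<dots> = - (fps_X ^ (N+1) * (R ^ (N+1) * Q x y * H))"
      by (simp only: PR power_mult_distrib) (simp add: ac_simps)
    finally show ?thesis .
  qed
  hence "(S * Q x y - G x y) $ m = 0" using assms by (simp only: fps_neg_nth fps_X_power_mult_nth) simp
  hence "(S * Q x y) $ m = G x y $ m" by simp
  moreover have "(S * Q x y) $ m = (\<Sum>n=1..N. (P x y ^ n * Q x y) $ m)"
    by (simp add: S_def sum_distrib_right fps_sum_nth)
  ultimately show ?thesis by (simp add: G_nth)
qed

lemma main2:
  fixes x y :: "'a::field_char_0"
  assumes "m \<ge> 1"
  shows "(1 - x ^ m) * (1 - y ^ m) = (\<Sum>n=1..m. ((1 - x) * (1 - y)) ^ n * (of_nat m / of_nat n) * F x y n $ (m - n))"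
  using sum_coeff[of m m x y] by (simp add: PQ_nth)

lemma second_form:
  fixes x y :: "'a::field_char_0" and m :: nat
  assumes "m \<ge> 1"
  shows "(1 - x ^ m) * (1 - y ^ m)
           = (\<Sum>k = 0..m - 1. \<Sum>i = 0..k.
                of_nat m / of_nat (m - k)
                * of_nat ((m - k + i - 1) choose i) * of_nat ((m - i - 1) choose (k - i))
                * x ^ i * y ^ (k - i) * (1 - x) ^ (m - k) * (1 - y) ^ (m - k))"
proof -
  define g where "g n = ((1 - x) * (1 - y)) ^ n * (of_nat m / of_nat n) * F x y n $ (m - n)" for n
  have inner: "(\<Sum>i = 0..k. of_nat m / of_nat (m - k)
                * of_nat ((m - k + i - 1) choose i) * of_nat ((m - i - 1) choose (k - i))
                * x ^ i * y ^ (k - i) * (1 - x) ^ (m - k) * (1 - y) ^ (m - k)) = g (m - k)"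
    if k: "k \<in> {0..m-1}" for k
  proof -
    have mk: "m - (m - k) = k" using k assms by auto
    have "g (m - k) = (\<Sum>i=0..k. ((1 - x) * (1 - y)) ^ (m - k) * (of_nat m / of_nat (m - k)) *
        (of_nat (m - k + i - 1 choose i) * x ^ i * (of_nat (m - k + (k - i) - 1 choose (k - i)) * y ^ (k - i))))"
      unfolding g_def mk F_nth by (simp add: sum_distrib_left)
    also have "\<dots> = (\<Sum>i = 0..k. of_nat m / of_nat (m - k)
                * of_nat ((m - k + i - 1) choose i) * of_nat ((m - i - 1) choose (k - i))
                * x ^ i * y ^ (k - i) * (1 - x) ^ (m - k) * (1 - y) ^ (m - k))"
    proof (rule sum.cong)
      fix i assume i: "i \<in> {0..k}"
      have "m - k + (k - i) - 1 = m - i - 1" using i k assms by auto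
      then show "((1 - x) * (1 - y)) ^ (m - k) * (of_nat m / of_nat (m - k)) *
        (of_nat (m - k + i - 1 choose i) * x ^ i * (of_nat (m - k + (k - i) - 1 choose (k - i)) * y ^ (k - i))) =
        of_nat m / of_nat (m - k)
                * of_nat ((m - k + i - 1) choose i) * of_nat ((m - i - 1) choose (k - i))
                * x ^ i * y ^ (k - i) * (1 - x) ^ (m - k) * (1 - y) ^ (m - k)"
        by (simp add: power_mult_distrib ac_simps)
    qed simp
    finally show ?thesis by simp
  qed
  have r: "(\<Sum>k = 0..m - 1. g (m - k)) = (\<Sum>n = 1..m. g n)"
    using assms by (intro sum.reindex_bij_witness[where i="\<lambda>n. m - n" and j="\<lambda>k. m - k"]) auto
  have s: "(\<Sum>k = 0..m - 1. \<Sum>i = 0..k. of_nat m / of_nat (m - k)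
                * of_nat ((m - k + i - 1) choose i) * of_nat ((m - i - 1) choose (k - i))
                * x ^ i * y ^ (k - i) * (1 - x) ^ (m - k) * (1 - y) ^ (m - k)) = (\<Sum>k = 0..m - 1. g (m - k))"
    by (rule sum.cong, rule refl, erule inner)
  show ?thesis unfolding s r unfolding g_def by (rule main2[OF assms])
qed

lemma first_form:
  fixes x y :: "'a::field_char_0" and m :: nat
  assumes x: "x \<noteq> 1" and y: "y \<noteq> 1"
  shows "(1 - x ^ (m + 1)) * (1 - y ^ (m + 1)) / ((1 - x) ^ (m + 1) * (1 - y) ^ (m + 1))
           = (\<Sum>r = 0..m. \<Sum>s = 0..m - r.
                of_nat (m + 1) / of_nat (m + 1 - r - s)
                * of_nat ((m - r) choose s) * of_nat ((m - s) choose r)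
                * (x ^ r * y ^ s / ((1 - x) ^ (r + s) * (1 - y) ^ (r + s))))"
proof -
  define M where "M = m + 1"
  define f where "f r s = of_nat (m + 1) / of_nat (m + 1 - r - s)
                * of_nat ((m - r) choose s) * of_nat ((m - s) choose r)
                * (x ^ r * y ^ s / ((1 - x) ^ (r + s) * (1 - y) ^ (r + s)))" for r s
  define T where "T k i = of_nat M / of_nat (M - k)
                * of_nat ((M - k + i - 1) choose i) * of_nat ((M - i - 1) choose (k - i))
                * x ^ i * y ^ (k - i) * (1 - x) ^ (M - k) * (1 - y) ^ (M - k)" for k i
  have x0: "1 - x \<noteq> 0" and y0: "1 - y \<noteq> 0" using x y by auto
  have sf: "(1 - x ^ M) * (1 - y ^ M) = (\<Sum>k = 0..m. \<Sum>i = 0..k. T k i)"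
    using second_form[of M x y] unfolding T_def M_def by simp
  have "(\<Sum>r = 0..m. \<Sum>s = 0..m - r. f r s) = (\<Sum>(r,s)\<in>{(r,s). r + s \<le> m}. f r s)"
  proof -
    have "{(r,s). r + s \<le> m} = Sigma {0..m} (\<lambda>r. {0..m - r})" by auto
    then show ?thesis by (simp add: sum.Sigma)
  qed
  also have "\<dots> = (\<Sum>k\<le>m. \<Sum>i\<le>k. f i (k - i))" by (rule sum.triangle_reindex_eq)
  also have "\<dots> = (\<Sum>k = 0..m. \<Sum>i = 0..k. T k i / ((1 - x) ^ M * (1 - y) ^ M))"
  proof (rule sum.cong)
    show "{..m} = {0..m}" by auto
  next
    fix k assume k: "k \<in> {0..m}"
    show "(\<Sum>i\<le>k. f i (k - i)) = (\<Sum>i = 0..k. T k i / ((1 - x) ^ M * (1 - y) ^ M))"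
    proof (rule sum.cong)
      show "{..k} = {0..k}" by auto
    next
      fix i assume i: "i \<in> {0..k}"
      have e1: "M - k + i - 1 = m - (k - i)" "M - i - 1 = m - i" "i + (k - i) = k" "m + 1 - i - (k - i) = M - k"
        using i k by (auto simp: M_def)
      have px: "(1 - x) ^ M = (1 - x) ^ (M - k) * (1 - x) ^ k" and py: "(1 - y) ^ M = (1 - y) ^ (M - k) * (1 - y) ^ k"
        using k by (simp_all add: power_add[symmetric] M_def)
      have nz: "(1 - x) ^ (M - k) \<noteq> 0" "(1 - y) ^ (M - k) \<noteq> 0" "(1 - x) ^ k \<noteq> 0" "(1 - y) ^ k \<noteq> 0"
        using x0 y0 by simp_all
      have "of_nat (m + 1) = (of_nat M :: 'a)" by (simp add: M_def)
      then show "f i (k - i) = T k i / ((1 - x) ^ M * (1 - y) ^ M)"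
        unfolding f_def T_def e1 px py using nz by (simp add: field_simps)
    qed
  qed
  also have "\<dots> = (1 - x ^ M) * (1 - y ^ M) / ((1 - x) ^ M * (1 - y) ^ M)"
    unfolding sf by (simp add: sum_divide_distrib)
  finally show ?thesis unfolding f_def M_def by simp
qed

theorem corollary2p6:
  fixes x y :: "'a :: field_char_0" and m :: nat
  shows "(x \<noteq> 1 \<and> y \<noteq> 1 \<longrightarrow>
           (1 - x ^ (m + 1)) * (1 - y ^ (m + 1)) / ((1 - x) ^ (m + 1) * (1 - y) ^ (m + 1))
           = (\<Sum>r = 0..m. \<Sum>s = 0..m - r.
                of_nat (m + 1) / of_nat (m + 1 - r - s)
                * of_nat ((m - r) choose s) * of_nat ((m - s) choose r)
                * (x ^ r * y ^ s / ((1 - x) ^ (r + s) * (1 - y) ^ (r + s)))))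
       \<and> (m \<ge> 1 \<longrightarrow>
           (1 - x ^ m) * (1 - y ^ m)
           = (\<Sum>k = 0..m - 1. \<Sum>i = 0..k.
                of_nat m / of_nat (m - k)
                * of_nat ((m - k + i - 1) choose i) * of_nat ((m - i - 1) choose (k - i))
                * x ^ i * y ^ (k - i) * (1 - x) ^ (m - k) * (1 - y) ^ (m - k)))"
  using first_form[of x y m] second_form[of m x y] by blast

end
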